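(* Let $R$ be a finite local Frobenius ring which is not a field and has odd characteristic, with a fixed primitive additive character $\psi$, and let $\tau$ be a non-primitive multiplicative character of $R$. Then $$\sum_{a\in R^\times}|K_\tau(a)|^4=3\,|R^\times|\,|R|^2.$$
   Context: All rings are finite and commutative with identity; $R^\times$ is the unit group; $M$ is the maximal ideal. An additive character $(R,+)\to\mathbb{C}^*$ is primitive if the only ideal on which it is identically $1$ is $(0)$; $R$ is Frobenius if such a character exists. A multiplicative character is a homomorphism $R^\times\to\mathbb{C}^*$; its conductor is $R$ if it is trivial, and otherwise the largest ideal $I\subseteq M$ such that it is identically $1$ on $1+I$; it is primitive if its conductor is $(0)$. $K_\tau(a)=\sum_{u\in R^\times}\tau(u)\psi(u+au^{-1})$. Odd characteristic means $R/M$ has odd characteristic. *)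

theory Defs
  imports "HOL-Analysis.Analysis"
begin

definition units_of_ring :: "'a::comm_ring_1 set" where
  "units_of_ring = {u. \<exists>v. u * v = 1}"

definition ring_inv :: "'a::comm_ring_1 \<Rightarrow> 'a" where
  "ring_inv u = (THE v. u * v = 1)"

definition is_ideal :: "'a::comm_ring_1 set \<Rightarrow> bool" where
  "is_ideal I \<longleftrightarrow> 0 \<in> I \<and> (\<forall>x\<in>I. \<forall>y\<in>I. x + y \<in> I) \<and> (\<forall>r. \<forall>x\<in>I. r * x \<in> I)"

text \<open>A finite commutative ring is local iff its non-units form an ideal; this ideal is then
  the unique maximal ideal M.\<close>
definition max_ideal :: "'a::comm_ring_1 set" where
  "max_ideal = - units_of_ring"

definition local_ring :: "'a::{comm_ring_1,finite} itself \<Rightarrow> bool" where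
  "local_ring _ \<longleftrightarrow> (0::'a) \<noteq> 1 \<and> is_ideal (max_ideal :: 'a set)"

definition is_field_ring :: "'a::comm_ring_1 itself \<Rightarrow> bool" where
  "is_field_ring _ \<longleftrightarrow> (0::'a) \<noteq> 1 \<and> (\<forall>x::'a. x \<noteq> 0 \<longrightarrow> x \<in> units_of_ring)"

text \<open>Characteristic of the residue field R/M: least positive n with n\<cdot>1 in M.\<close>
definition residue_char :: "'a::comm_ring_1 itself \<Rightarrow> nat" where
  "residue_char _ = (LEAST n. n > 0 \<and> (of_nat n :: 'a) \<in> max_ideal)"

definition additive_character :: "('a::comm_ring_1 \<Rightarrow> complex) \<Rightarrow> bool" where
  "additive_character \<psi> \<longleftrightarrow> (\<forall>x y. \<psi> (x + y) = \<psi> x * \<psi> y) \<and> (\<forall>x. \<psi> x \<noteq> 0)"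

definition primitive_additive_character :: "('a::comm_ring_1 \<Rightarrow> complex) \<Rightarrow> bool" where
  "primitive_additive_character \<psi> \<longleftrightarrow> additive_character \<psi> \<and>
     (\<forall>I. is_ideal I \<and> (\<forall>x\<in>I. \<psi> x = 1) \<longrightarrow> I = {0})"

text \<open>Multiplicative character: homomorphism on the unit group (values off units irrelevant).\<close>
definition mult_character :: "('a::comm_ring_1 \<Rightarrow> complex) \<Rightarrow> bool" where
  "mult_character \<tau> \<longleftrightarrow>
     (\<forall>u\<in>units_of_ring. \<forall>v\<in>units_of_ring. \<tau> (u * v) = \<tau> u * \<tau> v) \<and>
     (\<forall>u\<in>units_of_ring. \<tau> u \<noteq> 0)"

definition trivial_mult_character :: "('a::comm_ring_1 \<Rightarrow> complex) \<Rightarrow> bool" where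
  "trivial_mult_character \<tau> \<longleftrightarrow> (\<forall>u\<in>units_of_ring. \<tau> u = 1)"

definition conductor :: "('a::comm_ring_1 \<Rightarrow> complex) \<Rightarrow> 'a set" where
  "conductor \<tau> = (if trivial_mult_character \<tau> then UNIV else
     (THE I. is_ideal I \<and> I \<subseteq> max_ideal \<and> (\<forall>x\<in>I. \<tau> (1 + x) = 1) \<and>
        (\<forall>J. is_ideal J \<and> J \<subseteq> max_ideal \<and> (\<forall>x\<in>J. \<tau> (1 + x) = 1) \<longrightarrow> J \<subseteq> I)))"

definition primitive_mult_character :: "('a::comm_ring_1 \<Rightarrow> complex) \<Rightarrow> bool" where
  "primitive_mult_character \<tau> \<longleftrightarrow> conductor \<tau> = {0}"

definition kloosterman :: "('a::{comm_ring_1,finite} \<Rightarrow> complex) \<Rightarrow> ('a \<Rightarrow> complex) \<Rightarrow> 'a \<Rightarrow> complex" where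
  "kloosterman \<psi> \<tau> a = (\<Sum>u\<in>units_of_ring. \<tau> u * \<psi> (u + a * ring_inv u))"

end

theory Submission
  imports Defs
begin


lemma unitsI: "u * v = 1 \<Longrightarrow> u \<in> units_of_ring"
  unfolding units_of_ring_def by blast

lemma ring_inv: "u \<in> units_of_ring \<Longrightarrow> u * ring_inv u = (1::'a::comm_ring_1)"
proof -
  assume "u \<in> units_of_ring"
  then obtain v where v: "u * v = 1" unfolding units_of_ring_def by blast
  have "ring_inv u = v" unfolding ring_inv_def
  proof (rule the_equality)
    fix w assume "u * w = 1"
    then show "w = v" using v by (metis mult.assoc mult.commute mult_1_left mult_1_right)
  qed (rule v)
  then show ?thesis using v by simp
qed

lemma ring_inv_unit: "u \<in> units_of_ring \<Longrightarrow> ring_inv u \<in> (units_of_ring::'a::comm_ring_1 set)"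
  by (metis mult.commute ring_inv unitsI)

lemma units_mult: "u \<in> units_of_ring \<Longrightarrow> v \<in> units_of_ring \<Longrightarrow> u * v \<in> (units_of_ring::'a::comm_ring_1 set)"
proof -
  assume "u \<in> units_of_ring" "v \<in> units_of_ring"
  then obtain a b where "u * a = 1" "v * b = 1" unfolding units_of_ring_def by blast
  then have "(u * v) * (a * b) = 1" by (metis mult.assoc mult.left_commute mult_1_right)
  then show ?thesis by (rule unitsI)
qed

lemma units_mult_iff: "(u * v \<in> (units_of_ring::'a::comm_ring_1 set)) = (u \<in> units_of_ring \<and> v \<in> units_of_ring)"
proof
  assume "u * v \<in> units_of_ring"
  then obtain w where "u * v * w = 1" unfolding units_of_ring_def by blast
  then have "u * (v * w) = 1" "v * (u * w) = 1" by (simp_all add: ac_simps)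
  then show "u \<in> units_of_ring \<and> v \<in> units_of_ring" using unitsI by blast
qed (simp add: units_mult)

lemma one_unit[simp]: "1 \<in> (units_of_ring::'a::comm_ring_1 set)"
  by (rule unitsI[of 1 1]) simp

lemma uminus_unit: "u \<in> units_of_ring \<Longrightarrow> - u \<in> (units_of_ring::'a::comm_ring_1 set)"
  by (metis minus_mult_minus ring_inv unitsI)

lemma ring_inv_mult: "u \<in> units_of_ring \<Longrightarrow> v \<in> units_of_ring \<Longrightarrow>
   ring_inv (u * v) = ring_inv u * (ring_inv v :: 'a::comm_ring_1)"
proof -
  assume u: "u \<in> units_of_ring" and v: "v \<in> units_of_ring"
  have uv: "u * v \<in> units_of_ring" using u v units_mult by blast
  have "ring_inv (u * v) = ring_inv (u * v) * ((u * ring_inv u) * (v * ring_inv v))"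
    using ring_inv[OF u] ring_inv[OF v] by simp
  also have "\<dots> = ((u * v) * ring_inv (u * v)) * (ring_inv u * ring_inv v)" by (simp add: ac_simps)
  also have "\<dots> = ring_inv u * ring_inv v" using ring_inv[OF uv] by simp
  finally show ?thesis .
qed

lemma ring_inv_eq: "u * v = (1::'a::comm_ring_1) \<Longrightarrow> ring_inv u = v"
  by (metis mult.left_commute mult_1_right ring_inv unitsI)

lemma ring_inv_uminus: "u \<in> units_of_ring \<Longrightarrow> ring_inv (- u) = - (ring_inv u :: 'a::comm_ring_1)"
  by (metis minus_mult_minus ring_inv ring_inv_eq)

lemma max_ideal_iff: "x \<in> max_ideal \<longleftrightarrow> x \<notin> units_of_ring"
  unfolding max_ideal_def by simp


definition ann_M :: "'a::comm_ring_1 set" where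
  "ann_M = {s. \<forall>m\<in>max_ideal. s * m = 0}"

locale kl =
  fixes \<psi> \<tau> :: "'a::{comm_ring_1,finite} \<Rightarrow> complex"
  assumes loc: "local_ring TYPE('a)"
  and nf: "\<not> is_field_ring TYPE('a)"
  and oddc: "odd (residue_char TYPE('a))"
  and pa: "primitive_additive_character \<psi>"
  and mc: "mult_character \<tau>"
  and np: "\<not> primitive_mult_character \<tau>"
begin

abbreviation U where "U \<equiv> (units_of_ring :: 'a set)"
abbreviation M where "M \<equiv> (max_ideal :: 'a set)"
abbreviation S where "S \<equiv> (ann_M :: 'a set)"

lemma zero_ne_one': "(0::'a) \<noteq> 1"
  using loc unfolding local_ring_def by simp

lemma M_ideal: "is_ideal M"
  using loc unfolding local_ring_def by simp

lemma M_zero[simp]: "0 \<in> M"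
  using M_ideal unfolding is_ideal_def by simp

lemma M_add: "x \<in> M \<Longrightarrow> y \<in> M \<Longrightarrow> x + y \<in> M"
  using M_ideal unfolding is_ideal_def by simp

lemma M_mult: "x \<in> M \<Longrightarrow> r * x \<in> M"
  using M_ideal unfolding is_ideal_def by simp

lemma M_mult2: "x \<in> M \<Longrightarrow> x * r \<in> M"
  by (metis M_mult mult.commute)

lemma M_uminus: "x \<in> M \<Longrightarrow> - x \<in> M"
  using M_mult[of x "-1"] by simp

lemma M_diff: "x \<in> M \<Longrightarrow> y \<in> M \<Longrightarrow> x - y \<in> M"
  using M_add M_uminus by (metis diff_conv_add_uminus)

lemma one_notin_M: "1 \<notin> M"
  by (simp add: max_ideal_iff)

lemma unit_add_M: "u \<in> U \<Longrightarrow> m \<in> M \<Longrightarrow> u + m \<in> U"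
  using M_diff[of "u+m" m] by (auto simp: max_ideal_iff)

lemma M_mult_iff: "x * y \<in> M \<longleftrightarrow> x \<in> M \<or> y \<in> M"
  by (simp add: max_ideal_iff units_mult_iff)

lemma two_unit: "(2::'a) \<in> U"
proof (rule ccontr)
  assume "(2::'a) \<notin> U"
  then have m2: "(of_nat 2 :: 'a) \<in> M" by (simp add: max_ideal_iff)
  define L where "L = (LEAST n. n > 0 \<and> (of_nat n :: 'a) \<in> M)"
  have "L \<le> 2" unfolding L_def by (rule Least_le) (use m2 in simp)
  moreover have "L > 0 \<and> (of_nat L :: 'a) \<in> M" unfolding L_def by (rule LeastI[of _ 2]) (use m2 in simp)
  ultimately have "L = 2" using one_notin_M by (cases L; cases "L - 1") auto
  then show False using oddc unfolding residue_char_def L_def[symmetric] by simp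
qed

lemma nat_collide: "\<exists>n m::nat. n < m \<and> f n = (f m :: 'a)"
proof -
  have "\<not> inj f"
  proof
    assume "inj f"
    then have "finite (UNIV :: nat set)" using finite_imageD[of f UNIV] by simp
    then show False by simp
  qed
  then obtain n m where "n \<noteq> m" "f n = f m" unfolding inj_def by blast
  then show ?thesis by (metis linorder_neqE_nat)
qed

lemma psi_add: "\<psi> (x + y) = \<psi> x * \<psi> y"
  using pa unfolding primitive_additive_character_def additive_character_def by blast

lemma psi_nz: "\<psi> x \<noteq> 0"
  using pa unfolding primitive_additive_character_def additive_character_def by blast

lemma psi_0[simp]: "\<psi> 0 = 1"
proof -
  have "\<psi> 0 = \<psi> 0 * \<psi> 0" using psi_add[of 0 0] by simp
  then show ?thesis using psi_nz[of 0] by simp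
qed

lemma psi_nat: "\<psi> (of_nat n * x) = \<psi> x ^ n"
  by (induction n) (simp_all add: distrib_right psi_add)

lemma psi_norm[simp]: "norm (\<psi> x) = 1"
proof -
  obtain n m :: nat where nm: "n < m" "of_nat n * x = of_nat m * x"
    using nat_collide[of "\<lambda>n. of_nat n * x"] by blast
  then have "\<psi> x ^ n = \<psi> x ^ m" using psi_nat by metis
  also have "\<dots> = \<psi> x ^ n * \<psi> x ^ (m - n)" using nm(1) by (simp add: power_add[symmetric])
  finally have "\<psi> x ^ (m - n) = 1" using psi_nz[of x] by simp
  then show ?thesis using power_eq_1_iff nm(1) by fastforce
qed

lemma psi_cnj: "cnj (\<psi> x) = \<psi> (- x)"
proof -
  have "\<psi> x * cnj (\<psi> x) = 1" using complex_norm_square[of "\<psi> x"] by simp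
  moreover have "\<psi> x * \<psi> (- x) = 1" using psi_add[of x "-x"] by simp
  ultimately show ?thesis using psi_nz[of x] by (metis mult_left_cancel)
qed

lemma tau_mult: "u \<in> U \<Longrightarrow> v \<in> U \<Longrightarrow> \<tau> (u * v) = \<tau> u * \<tau> v"
  using mc unfolding mult_character_def by blast

lemma tau_nz: "u \<in> U \<Longrightarrow> \<tau> u \<noteq> 0"
  using mc unfolding mult_character_def by blast

lemma tau_1[simp]: "\<tau> 1 = 1"
  using tau_mult[of 1 1] tau_nz[of 1] by simp

lemma units_power: "u \<in> U \<Longrightarrow> u ^ n \<in> U"
  by (induction n) (simp_all add: units_mult)

lemma tau_power: "u \<in> U \<Longrightarrow> \<tau> (u ^ n) = \<tau> u ^ n"
  by (induction n) (simp_all add: tau_mult units_power)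

lemma tau_norm: "u \<in> U \<Longrightarrow> norm (\<tau> u) = 1"
proof -
  assume u: "u \<in> U"
  obtain n m :: nat where nm: "n < m" "u ^ n = u ^ m"
    using nat_collide[of "\<lambda>n. u ^ n"] by blast
  have "u ^ n * ring_inv (u ^ n) = 1" using ring_inv units_power[OF u] by blast
  have "u ^ m = u ^ n * u ^ (m - n)" using nm(1) by (simp add: power_add[symmetric])
  then have "u ^ n * 1 = u ^ n * u ^ (m - n)" using nm by simp
  then have "ring_inv (u ^ n) * (u ^ n * 1) = ring_inv (u ^ n) * (u ^ n * u ^ (m - n))" by simp
  then have "u ^ (m - n) = 1" using ring_inv[OF units_power[OF u, of n]]
    by (metis mult.assoc mult.commute mult_1_left)
  then have "\<tau> u ^ (m - n) = 1" by (metis tau_1 tau_power[OF u])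
  then show ?thesis using power_eq_1_iff nm(1) by fastforce
qed

lemma tau_cnj: "u \<in> U \<Longrightarrow> \<tau> u * cnj (\<tau> u) = 1"
  using complex_norm_square[of "\<tau> u"] tau_norm by simp

lemma M_nonzero: "\<exists>x\<in>M. x \<noteq> 0"
  using nf zero_ne_one' unfolding is_field_ring_def by (auto simp: max_ideal_iff)

lemma char_sum_zero:
  fixes ch :: "'a \<Rightarrow> complex" and A :: "'a set"
  assumes hom: "\<And>x y. ch (x + y) = ch x * ch y"
    and add: "\<And>x y. x \<in> A \<Longrightarrow> y \<in> A \<Longrightarrow> x + y \<in> A"
    and neg: "\<And>x. x \<in> A \<Longrightarrow> - x \<in> A"
    and a: "a \<in> A" "ch a \<noteq> 1"
  shows "sum ch A = 0"
proof -
  have bij: "bij_betw (\<lambda>x. a + x) A A"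
    unfolding bij_betw_def inj_on_def
  proof (intro conjI ballI impI equalityI subsetI)
    fix y assume "y \<in> A"
    then have "- a + y \<in> A" using add neg a by blast
    then show "y \<in> (\<lambda>x. a + x) ` A" by (rule rev_image_eqI) simp
  qed (use add a in auto)
  have "sum ch A = sum (\<lambda>x. ch (a + x)) A"
    using sum.reindex_bij_betw[OF bij, of ch] by simp
  also have "\<dots> = ch a * sum ch A" by (simp add: hom sum_distrib_left)
  finally have "(1 - ch a) * sum ch A = 0" by (simp add: algebra_simps)
  then show ?thesis using a(2) by simp
qed

lemma ideal_neg: "is_ideal I \<Longrightarrow> x \<in> I \<Longrightarrow> - x \<in> I"
  unfolding is_ideal_def by (metis mult_minus1)

lemma ideal_sum:
  assumes I: "is_ideal I"
  shows "(\<Sum>t\<in>I. \<psi> (c * t)) = (if \<forall>t\<in>I. c * t = 0 then of_nat (card I) else 0)"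
proof (cases "\<forall>t\<in>I. c * t = 0")
  case True
  then show ?thesis by simp
next
  case False
  define J where "J = (\<lambda>t. c * t) ` I"
  have "is_ideal J" using I unfolding is_ideal_def J_def
  proof (intro conjI ballI allI)
    assume I': "0 \<in> I \<and> (\<forall>x\<in>I. \<forall>y\<in>I. x + y \<in> I) \<and> (\<forall>r. \<forall>x\<in>I. r * x \<in> I)"
    show "0 \<in> (*) c ` I" using I' by (metis imageI mult_zero_right)
    fix x y assume "x \<in> (*) c ` I" "y \<in> (*) c ` I"
    then obtain x' y' where "x' \<in> I" "y' \<in> I" "x = c * x'" "y = c * y'" by blast
    then show "x + y \<in> (*) c ` I" using I' by (metis distrib_left imageI)
  next
    fix r x assume I': "0 \<in> I \<and> (\<forall>x\<in>I. \<forall>y\<in>I. x + y \<in> I) \<and> (\<forall>r. \<forall>x\<in>I. r * x \<in> I)"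
      and "x \<in> (*) c ` I"
    then obtain x' where "x' \<in> I" "x = c * x'" by blast
    then show "r * x \<in> (*) c ` I" using I' by (metis imageI mult.left_commute)
  qed
  moreover have "J \<noteq> {0}" using False unfolding J_def by auto
  ultimately have "\<not> (\<forall>x\<in>J. \<psi> x = 1)"
    using pa unfolding primitive_additive_character_def by blast
  then obtain t where t: "t \<in> I" "\<psi> (c * t) \<noteq> 1" unfolding J_def by blast
  have "(\<Sum>t\<in>I. \<psi> (c * t)) = 0"
    by (rule char_sum_zero[of "\<lambda>t. \<psi> (c * t)" I t])
       (use I t in \<open>auto simp: distrib_left psi_add ideal_neg is_ideal_def\<close>)
  then show ?thesis by (subst if_not_P[OF False])
qed

lemma UNIV_ideal: "is_ideal (UNIV :: 'a set)"
  unfolding is_ideal_def by simp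

lemma S_ideal: "is_ideal S"
  unfolding is_ideal_def ann_M_def by (auto simp: distrib_right mult.assoc)

lemma duality:
  assumes I: "is_ideal I"
  shows "card I * card {c::'a. \<forall>t\<in>I. c * t = 0} = CARD('a)"
proof -
  let ?A = "{c::'a. \<forall>t\<in>I. c * t = 0}"
  have "(\<Sum>c\<in>UNIV. \<Sum>t\<in>I. \<psi> (c * t)) = (\<Sum>c\<in>UNIV. if c \<in> ?A then of_nat (card I) else 0)"
    using ideal_sum[OF I] by simp
  also have "\<dots> = of_nat (card ?A) * of_nat (card I)"
    by (simp add: sum.If_cases)
  finally have 1: "(\<Sum>c\<in>UNIV. \<Sum>t\<in>I. \<psi> (c * t)) = of_nat (card ?A * card I)" by simp
  have "(\<Sum>c\<in>UNIV. \<Sum>t\<in>I. \<psi> (c * t)) = (\<Sum>t\<in>I. \<Sum>c\<in>UNIV. \<psi> (t * c))"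
    by (subst sum.swap) (simp add: mult.commute)
  also have "\<dots> = (\<Sum>t\<in>I. if t = 0 then of_nat CARD('a) else 0)"
  proof (rule sum.cong)
    fix t assume "t \<in> I"
    have "(\<forall>c\<in>UNIV. t * c = 0) = (t = 0)" by (metis UNIV_I mult_1_right mult_zero_left)
    then show "(\<Sum>c\<in>UNIV. \<psi> (t * c)) = (if t = 0 then of_nat CARD('a) else 0)"
      using ideal_sum[OF UNIV_ideal, of t] by simp
  qed simp
  also have "\<dots> = of_nat CARD('a)" using I unfolding is_ideal_def
    by (simp add: sum.delta)
  finally have "of_nat (card ?A * card I) = (of_nat CARD('a) :: complex)" using 1 by simp
  then have "card ?A * card I = CARD('a)" by (simp only: of_nat_eq_iff)
  then show ?thesis by (simp add: mult.commute)
qed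

lemma card_M_S: "card M * card S = CARD('a)"
  using duality[OF M_ideal] unfolding ann_M_def by (simp add: mult.commute)

end




context kl begin

lemma S_subset_M: "S \<subseteq> M"
proof
  fix s assume s: "s \<in> S"
  show "s \<in> M"
  proof (rule ccontr)
    assume "s \<notin> M"
    then have su: "s \<in> U" by (simp add: max_ideal_iff)
    obtain x where x: "x \<in> M" "x \<noteq> 0" using M_nonzero by blast
    have "s * x = 0" using s x unfolding ann_M_def by blast
    then have "ring_inv s * (s * x) = 0" by simp
    then have "x = 0" using ring_inv[OF su] by (metis mult.assoc mult.commute mult_1_left)
    then show False using x by simp
  qed
qed

lemma S_mult: "s \<in> S \<Longrightarrow> m \<in> M \<Longrightarrow> s * m = 0"
  unfolding ann_M_def by blast

lemma S_mult': "s \<in> S \<Longrightarrow> m \<in> M \<Longrightarrow> m * s = 0"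
  unfolding ann_M_def by (simp add: mult.commute)

lemma S_sq: "s \<in> S \<Longrightarrow> t \<in> S \<Longrightarrow> s * t = 0"
  using S_mult S_subset_M by blast

lemma unit_mult_zero: "u \<in> U \<Longrightarrow> u * x = 0 \<Longrightarrow> x = 0"
  by (metis mult.assoc mult.commute mult_1_left mult_zero_right ring_inv)

lemma card_M_less: "card M < CARD('a)"
  using one_notin_M by (metis UNIV_I card_seteq finite linorder_not_le subsetI)

lemma S_nonzero: "\<exists>s\<in>S. s \<noteq> 0"
proof (rule ccontr)
  assume "\<not> ?thesis"
  then have "S \<subseteq> {0}" by blast
  then have "card S \<le> 1" using card_mono[of "{0}" S] by simp
  then have "card M * card S \<le> card M" by simp
  then show False using card_M_S card_M_less by simp
qed

lemma ann_S: "{c::'a. \<forall>t\<in>S. c * t = 0} = M"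
proof (intro equalityI subsetI)
  fix c assume "c \<in> {c::'a. \<forall>t\<in>S. c * t = 0}"
  then have c: "\<forall>t\<in>S. c * t = 0" by simp
  show "c \<in> M"
  proof (rule ccontr)
    assume "c \<notin> M"
    then have "c \<in> U" by (simp add: max_ideal_iff)
    moreover obtain s where "s \<in> S" "s \<noteq> 0" using S_nonzero by blast
    ultimately show False using c unit_mult_zero by blast
  qed
qed (auto simp: S_mult')

definition P :: "'a \<Rightarrow> 'a set" where "P y = range (\<lambda>r. r * y)"

lemma P_ideal: "is_ideal (P y)"
  unfolding is_ideal_def P_def
  by (auto simp: distrib_right mult.assoc) (metis mult_zero_left rangeI, metis distrib_right rangeI, metis mult.assoc rangeI)

lemma P_sub: "is_ideal I \<Longrightarrow> y \<in> I \<Longrightarrow> P y \<subseteq> I"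
  unfolding P_def is_ideal_def by blast

lemma S_in_ideal:
  assumes I: "is_ideal I" and nz: "I \<noteq> {0}"
  shows "S \<subseteq> I"
proof -
  have "\<exists>y. y \<in> I \<and> y \<noteq> 0" using I nz unfolding is_ideal_def by blast
  then obtain y where y: "y \<in> I" "y \<noteq> 0" and ymin: "\<And>z. z \<in> I \<and> z \<noteq> 0 \<Longrightarrow> card (P y) \<le> card (P z)"
    using ex_has_least_nat[of "\<lambda>y. y \<in> I \<and> y \<noteq> 0" _ "\<lambda>y. card (P y)"] by blast
  have yS: "y \<in> S"
  proof (rule ccontr)
    assume "y \<notin> S"
    then obtain m where m: "m \<in> M" "y * m \<noteq> 0" unfolding ann_M_def by blast
    have zI: "y * m \<in> I" using I y(1) unfolding is_ideal_def by (metis mult.commute)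
    have sub: "P (y * m) \<subseteq> P y" unfolding P_def by (auto simp: mult.assoc) (metis mult.assoc mult.commute rangeI)
    have "y \<notin> P (y * m)"
    proof
      assume "y \<in> P (y * m)"
      then obtain r where "y = r * (y * m)" unfolding P_def by blast
      then have "(1 - r * m) * y = 0" by (simp add: algebra_simps)
      moreover have "1 - r * m \<in> U"
        using unit_add_M[OF one_unit M_uminus[OF M_mult[OF m(1), of r]]] by simp
      ultimately show False using unit_mult_zero y(2) by blast
    qed
    moreover have "y \<in> P y" unfolding P_def by (metis mult_1_left rangeI)
    ultimately have "P (y * m) \<subset> P y" using sub by blast
    then have "card (P (y * m)) < card (P y)" by (simp add: psubset_card_mono)
    then show False using ymin[of "y * m"] zI m(2) by simp
  qed
  have annP: "{c::'a. \<forall>t\<in>P y. c * t = 0} = M"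
  proof (intro equalityI subsetI)
    fix c assume "c \<in> {c::'a. \<forall>t\<in>P y. c * t = 0}"
    then have "c * (1 * y) = 0" unfolding P_def by blast
    then show "c \<in> M" using unit_mult_zero y(2) by (auto simp: max_ideal_iff)
  next
    fix c assume c: "c \<in> M"
    show "c \<in> {c::'a. \<forall>t\<in>P y. c * t = 0}"
      using S_mult'[OF yS c] unfolding P_def by (auto simp: mult.left_commute)
  qed
  have "card (P y) * card M = CARD('a)" using duality[OF P_ideal, of y] annP by simp
  then have "card (P y) * card M = card S * card M" using card_M_S by (simp add: mult.commute)
  moreover have Mne: "M \<noteq> {}" using M_zero by blast
  ultimately have "card (P y) = card S" by simp
  moreover have "P y \<subseteq> S" using P_sub[OF S_ideal yS] .
  ultimately have "P y = S" using card_subset_eq by (metis finite)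
  then show ?thesis using P_sub[OF I y(1)] by simp
qed

lemma tau_S: assumes s: "s \<in> S" shows "\<tau> (1 + s) = 1"
proof (cases "trivial_mult_character \<tau>")
  case True
  have "1 + s \<in> U" using unit_add_M[OF one_unit] s S_subset_M by blast
  then show ?thesis using True unfolding trivial_mult_character_def by blast
next
  case False
  show ?thesis
  proof (rule ccontr)
    assume ns: "\<tau> (1 + s) \<noteq> 1"
    let ?Q = "\<lambda>I. is_ideal I \<and> I \<subseteq> M \<and> (\<forall>x\<in>I. \<tau> (1 + x) = 1) \<and>
        (\<forall>J. is_ideal J \<and> J \<subseteq> M \<and> (\<forall>x\<in>J. \<tau> (1 + x) = 1) \<longrightarrow> J \<subseteq> I)"
    have key: "J \<subseteq> {0}" if "is_ideal J" "\<forall>x\<in>J. \<tau> (1 + x) = 1" for J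
    proof (rule ccontr)
      assume "\<not> J \<subseteq> {0}"
      then have "J \<noteq> {0}" by blast
      then have "S \<subseteq> J" using S_in_ideal that(1) by blast
      then show False using ns s that(2) by blast
    qed
    have z: "is_ideal {0::'a}" unfolding is_ideal_def by simp
    have "(THE I. ?Q I) = {0}"
    proof (rule the_equality)
      show "?Q {0}"
      proof (intro conjI allI impI)
        fix J assume "is_ideal J \<and> J \<subseteq> M \<and> (\<forall>x\<in>J. \<tau> (1 + x) = 1)"
        then show "J \<subseteq> {0}" using key by simp
      qed (use z in auto)
    next
      fix I assume QI: "?Q I"
      then have "I \<subseteq> {0}" using key by simp
      moreover have "0 \<in> I" using QI unfolding is_ideal_def by simp
      ultimately show "I = {0}" by blast
    qed
    then have "conductor \<tau> = {0}" using False unfolding conductor_def by simp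
    then show False using np unfolding primitive_mult_character_def by simp
  qed
qed

lemma S_unit: "t \<in> S \<Longrightarrow> 1 + t \<in> U"
  using unit_add_M[OF one_unit] S_subset_M by blast

lemma S_inv: "t \<in> S \<Longrightarrow> ring_inv (1 + t) = 1 - t"
  using S_sq[of t t] by (intro ring_inv_eq) (simp add: algebra_simps)

end



context kl begin

definition Q :: "'a \<Rightarrow> 'a set" where "Q a = {u \<in> U. u * u - a \<in> M}"
definition C :: "'a \<Rightarrow> 'a set" where "C w = {u. u - w \<in> M}"

lemma reduction: "kloosterman \<psi> \<tau> a = (\<Sum>u\<in>Q a. \<tau> u * \<psi> (u + a * ring_inv u))"
proof -
  define g where "g u = \<tau> u * \<psi> (u + a * ring_inv u)" for u
  define c where "c u = u - a * ring_inv u" for u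
  have K: "kloosterman \<psi> \<tau> a = (\<Sum>u\<in>U. g u * \<psi> (c u * t))" if t: "t \<in> S" for t
  proof -
    have t1: "1 + t \<in> U" using S_unit[OF t] .
    have tt: "t * t = 0" using S_sq[OF t t] .
    have e: "x * (1 + t) * (1 - t) = x" for x
    proof -
      have "x * (1 + t) * (1 - t) = x - x * (t * t)" by (simp add: algebra_simps)
      then show ?thesis using tt by simp
    qed
    have bij: "bij_betw (\<lambda>u. u * (1 + t)) U U"
      unfolding bij_betw_def inj_on_def
    proof (intro conjI ballI impI equalityI subsetI)
      fix u v assume "u * (1 + t) = v * (1 + t)"
      then have "u * (1 + t) * (1 - t) = v * (1 + t) * (1 - t)" by simp
      then show "u = v" using e by metis
    next
      fix v assume v: "v \<in> U"
      have "v * (1 - t) \<in> U" using units_mult[OF v S_unit[OF ideal_neg[OF S_ideal t]]] by simp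
      moreover have "v = v * (1 - t) * (1 + t)" using e[of v] by (simp add: ac_simps)
      ultimately show "v \<in> (\<lambda>u. u * (1 + t)) ` U" by blast
    qed (use units_mult t1 in auto)
    have "kloosterman \<psi> \<tau> a = (\<Sum>u\<in>U. g u)" unfolding kloosterman_def g_def by simp
    also have "\<dots> = (\<Sum>u\<in>U. g (u * (1 + t)))"
      using sum.reindex_bij_betw[OF bij, of g] by simp
    also have "\<dots> = (\<Sum>u\<in>U. g u * \<psi> (c u * t))"
    proof (rule sum.cong)
      fix u assume u: "u \<in> U"
      have "\<tau> (u * (1 + t)) = \<tau> u" using tau_mult[OF u t1] tau_S[OF t] by simp
      moreover have "ring_inv (u * (1 + t)) = ring_inv u * (1 - t)"
        using ring_inv_mult[OF u t1] S_inv[OF t] by simp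
      moreover have "u * (1 + t) + a * (ring_inv u * (1 - t)) = (u + a * ring_inv u) + c u * t"
        unfolding c_def by (simp add: algebra_simps)
      ultimately show "g (u * (1 + t)) = g u * \<psi> (c u * t)"
        unfolding g_def by (simp add: psi_add)
    qed simp
    finally show ?thesis .
  qed
  have "of_nat (card S) * kloosterman \<psi> \<tau> a = (\<Sum>t\<in>S. kloosterman \<psi> \<tau> a)" by simp
  also have "\<dots> = (\<Sum>t\<in>S. \<Sum>u\<in>U. g u * \<psi> (c u * t))" using K by simp
  also have "\<dots> = (\<Sum>u\<in>U. g u * (\<Sum>t\<in>S. \<psi> (c u * t)))"
    by (subst sum.swap) (simp add: sum_distrib_left)
  also have "\<dots> = (\<Sum>u\<in>U. g u * (if c u \<in> M then of_nat (card S) else 0))"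
    using ideal_sum[OF S_ideal] ann_S by (simp add: set_eq_iff)
  also have "\<dots> = of_nat (card S) * (\<Sum>u\<in>{u\<in>U. c u \<in> M}. g u)"
    by (simp add: sum.inter_filter[symmetric] sum_distrib_left mult.commute if_distrib cong: if_cong)
  also have "{u\<in>U. c u \<in> M} = Q a"
  proof -
    have "c u \<in> M \<longleftrightarrow> u * u - a \<in> M" if u: "u \<in> U" for u
    proof -
      have "u * c u = u * u - a" unfolding c_def using ring_inv[OF u] by (simp add: algebra_simps)
      then show ?thesis using M_mult_iff[of u "c u"] u by (auto simp: max_ideal_iff)
    qed
    then show ?thesis unfolding Q_def by blast
  qed
  finally have "of_nat (card S) * kloosterman \<psi> \<tau> a = of_nat (card S) * (\<Sum>u\<in>Q a. g u)" .
  moreover have "S \<noteq> {}" using S_nonzero by blast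
  ultimately show ?thesis unfolding g_def by simp
qed

lemma C_units: "w \<in> U \<Longrightarrow> C w \<subseteq> U"
  unfolding C_def using unit_add_M by (metis add.commute diff_add_cancel mem_Collect_eq subsetI)

lemma card_C: "card (C w) = card M"
proof -
  have b: "bij_betw (\<lambda>m. w + m) M (C w)"
    unfolding bij_betw_def inj_on_def C_def
    by (auto simp: image_iff) (metis add_diff_cancel_left' add_diff_eq diff_add_cancel)
  show ?thesis using bij_betw_same_card[OF b] by simp
qed

lemma Q_split:
  assumes u0: "u0 \<in> U" and r: "u0 * u0 - a \<in> M"
  shows "Q a = C u0 \<union> C (- u0)" "C u0 \<inter> C (- u0) = {}"
proof -
  show "Q a = C u0 \<union> C (- u0)"
  proof (intro equalityI subsetI)
    fix u assume "u \<in> Q a"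
    then have "u * u - a \<in> M" unfolding Q_def by simp
    then have "(u * u - a) - (u0 * u0 - a) \<in> M" using M_diff r by blast
    moreover have "(u * u - a) - (u0 * u0 - a) = (u - u0) * (u - - u0)" by (simp add: algebra_simps)
    ultimately show "u \<in> C u0 \<union> C (- u0)" unfolding C_def using M_mult_iff by auto
  next
    fix u assume u: "u \<in> C u0 \<union> C (- u0)"
    then have uU: "u \<in> U" using C_units u0 uminus_unit by blast
    have h1: "(u - u0) * (u - - u0) \<in> M" using u unfolding C_def by (auto simp: M_mult M_mult2)
    have h2: "u * u - a = (u - u0) * (u - - u0) + (u0 * u0 - a)" by (simp add: algebra_simps)
    have "u * u - a \<in> M" by (subst h2) (rule M_add[OF h1 r])
    then show "u \<in> Q a" unfolding Q_def using uU by simp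
  qed
  show "C u0 \<inter> C (- u0) = {}"
  proof (rule ccontr)
    assume "C u0 \<inter> C (- u0) \<noteq> {}"
    then obtain u where "u - u0 \<in> M" "u - - u0 \<in> M" unfolding C_def by blast
    then have "(u - - u0) - (u - u0) \<in> M" using M_diff by blast
    moreover have "(u - - u0) - (u - u0) = 2 * u0" by (simp add: algebra_simps)
    ultimately have "2 * u0 \<in> M" by simp
    then show False using two_unit u0 M_mult_iff by (auto simp: max_ideal_iff)
  qed
qed

end



context kl begin

definition Kp :: "'a \<Rightarrow> 'a \<Rightarrow> complex" where
  "Kp a w = (\<Sum>u\<in>C w. \<tau> u * \<psi> (u + a * ring_inv u))"

definition hh :: "'a \<Rightarrow> 'a \<Rightarrow> 'a \<Rightarrow> 'a" where
  "hh a w x = x - a * ring_inv w * ring_inv x"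

lemma C_mem: "u \<in> C w \<longleftrightarrow> u - w \<in> M" by (simp add: C_def)

lemma bij_C: "bij_betw (\<lambda>m. b + m) M (C b)"
  unfolding bij_betw_def inj_on_def C_def
  by (auto simp: image_iff) (metis add_diff_cancel_left' diff_add_cancel)

lemma sum_C: "(\<Sum>y\<in>C b. f y) = (\<Sum>m\<in>M. f (b + m))"
  using sum.reindex_bij_betw[OF bij_C, of f] by simp

lemma unit_cancel_M: "u \<in> U \<Longrightarrow> u * x \<in> M \<Longrightarrow> x \<in> M"
  using M_mult_iff by (auto simp: max_ideal_iff)

lemma inv_near: assumes w: "w \<in> U" "w - 1 \<in> M" shows "ring_inv w - 1 \<in> M"
proof -
  have "ring_inv w * (1 - w) = ring_inv w - w * ring_inv w" by (simp add: algebra_simps)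
  then have "ring_inv w - 1 = ring_inv w * (1 - w)" using ring_inv[OF w(1)] by simp
  moreover have "1 - w \<in> M" using M_uminus[OF w(2)] by simp
  ultimately show ?thesis using M_mult by simp
qed

lemma hh_diff:
  assumes u: "u \<in> U" and u': "u' \<in> U"
  shows "hh a w u - hh a w u' = (u - u') * (1 + a * ring_inv w * ring_inv u * ring_inv u')"
proof -
  have "(u - u') * (1 + a * ring_inv w * ring_inv u * ring_inv u') =
     u - u' + a * ring_inv w * ring_inv u' * (u * ring_inv u) - a * ring_inv w * ring_inv u * (u' * ring_inv u')"
    by (simp add: algebra_simps)
  also have "\<dots> = hh a w u - hh a w u'"
    using ring_inv[OF u] ring_inv[OF u'] unfolding hh_def by (simp add: algebra_simps)
  finally show ?thesis by simp
qed

lemma factor_unit: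
  assumes u0: "u0 \<in> U" and r: "u0 * u0 - a \<in> M" and w: "w \<in> U" "w - 1 \<in> M"
    and u: "u \<in> C u0" and u': "u' \<in> C u0"
  shows "1 + a * ring_inv w * ring_inv u * ring_inv u' \<in> U"
proof -
  have uU: "u \<in> U" and u'U: "u' \<in> U" using u u' C_units[OF u0] by blast+
  define x where "x = a * ring_inv w * ring_inv u * ring_inv u' - 1"
  have "u * u' * x = a * ring_inv w * (u * ring_inv u) * (u' * ring_inv u') - u * u'"
    unfolding x_def by (simp add: algebra_simps)
  also have "\<dots> = a * ring_inv w - u * u'" using ring_inv[OF uU] ring_inv[OF u'U] by simp
  also have "\<dots> = a * (ring_inv w - 1) + (- (u0 * u0 - a)) + u0 * (- (u' - u0)) + u' * (- (u - u0))"
    by (simp add: algebra_simps)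
  finally have e: "u * u' * x = a * (ring_inv w - 1) + (- (u0 * u0 - a)) + u0 * (- (u' - u0)) + u' * (- (u - u0))" .
  have "u * u' * x \<in> M"
    unfolding e using inv_near[OF w] r u u' unfolding C_mem
    by (intro M_add M_mult M_uminus) auto
  then have "x \<in> M" using unit_cancel_M units_mult[OF uU u'U] by blast
  then have "2 + x \<in> U" using unit_add_M[OF two_unit] by blast
  moreover have "2 + x = 1 + a * ring_inv w * ring_inv u * ring_inv u'" unfolding x_def by simp
  ultimately show ?thesis by simp
qed

lemma hh_u0_M:
  assumes u0: "u0 \<in> U" and r: "u0 * u0 - a \<in> M" and w: "w \<in> U" "w - 1 \<in> M"
  shows "hh a w u0 \<in> M"
proof -
  have "u0 * hh a w u0 = u0 * u0 - a * ring_inv w * (u0 * ring_inv u0)"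
    unfolding hh_def by (simp add: algebra_simps)
  also have "\<dots> = (u0 * u0 - a) + (- (a * (ring_inv w - 1)))"
    using ring_inv[OF u0] by (simp add: algebra_simps)
  finally have "u0 * hh a w u0 \<in> M"
    using M_add[OF r M_uminus[OF M_mult[OF inv_near[OF w]]]] by simp
  then show ?thesis using unit_cancel_M u0 by blast
qed

lemma hh_bij:
  assumes u0: "u0 \<in> U" and r: "u0 * u0 - a \<in> M" and w: "w \<in> U" "w - 1 \<in> M"
  shows "bij_betw (hh a w) (C u0) (C (hh a w u0))"
proof -
  have inj: "inj_on (hh a w) (C u0)"
  proof (rule inj_onI)
    fix u u' assume u: "u \<in> C u0" and u': "u' \<in> C u0" and e: "hh a w u = hh a w u'"
    have uU: "u \<in> U" and u'U: "u' \<in> U" using u u' C_units[OF u0] by blast+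
    have "(u - u') * (1 + a * ring_inv w * ring_inv u * ring_inv u') = 0"
      using hh_diff[OF uU u'U, of a w] e by simp
    then have "(1 + a * ring_inv w * ring_inv u * ring_inv u') * (u - u') = 0" by (simp add: mult.commute)
    then have "u - u' = 0" using unit_mult_zero factor_unit[OF u0 r w u u'] by blast
    then show "u = u'" by simp
  qed
  have sub: "hh a w ` C u0 \<subseteq> C (hh a w u0)"
  proof
    fix y assume "y \<in> hh a w ` C u0"
    then obtain u where u: "u \<in> C u0" and y: "y = hh a w u" by blast
    have uU: "u \<in> U" using u C_units[OF u0] by blast
    have u0C: "u0 \<in> C u0" unfolding C_mem by simp
    have "hh a w u - hh a w u0 = (u - u0) * (1 + a * ring_inv w * ring_inv u * ring_inv u0)"
      using hh_diff[OF uU u0] .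
    moreover have "u - u0 \<in> M" using u C_mem by blast
    ultimately show "y \<in> C (hh a w u0)" unfolding C_mem y using M_mult2 by simp
  qed
  have "card (hh a w ` C u0) = card (C (hh a w u0))"
    using card_image[OF inj] card_C by simp
  then have "hh a w ` C u0 = C (hh a w u0)" using sub by (simp add: card_subset_eq)
  then show ?thesis using inj unfolding bij_betw_def by blast
qed

end



context kl begin

lemma mult_C_bij:
  assumes u0: "u0 \<in> U" and u: "u \<in> C u0"
  shows "bij_betw (\<lambda>w. u * w) (C 1) (C u0)"
proof -
  have uU: "u \<in> U" using u C_units[OF u0] by blast
  show ?thesis
    unfolding bij_betw_def
  proof (intro conjI)
    show "inj_on (\<lambda>w. u * w) (C 1)"
    proof (rule inj_onI)
      fix w w' assume "u * w = u * w'"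
      then have "u * (w - w') = 0" by (simp add: algebra_simps)
      then have "w - w' = 0" using unit_mult_zero[OF uU] by blast
      then show "w = w'" by simp
    qed
    show "(\<lambda>w. u * w) ` C 1 = C u0"
    proof (intro equalityI subsetI)
      fix v assume "v \<in> (\<lambda>w. u * w) ` C 1"
      then obtain w where w0: "w \<in> C 1" "v = u * w" by blast
      have w: "w - 1 \<in> M" "v = u * w" using w0 by (auto simp: C_def)
      have e: "v - u0 = u * (w - 1) + (u - u0)" using w(2) by (simp add: algebra_simps)
      have uu0: "u - u0 \<in> M" using u by (simp add: C_def)
      have "v - u0 \<in> M" unfolding e by (rule M_add[OF M_mult[OF w(1)] uu0])
      then show "v \<in> C u0" by (simp add: C_def)
    next
      fix v assume v: "v \<in> C u0"
      define w where "w = ring_inv u * v"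
      have "ring_inv u * (v - u) = w - 1" unfolding w_def using ring_inv[OF uU]
        by (simp add: algebra_simps)
      moreover have "v - u = (v - u0) - (u - u0)" by simp
      moreover have "v - u0 \<in> M" "u - u0 \<in> M" using v u by (simp_all add: C_def)
      ultimately have "w - 1 \<in> M" using M_mult[OF M_diff] by metis
      then have wC: "w \<in> C 1" by (simp add: C_def)
      have "u * w = v" unfolding w_def using ring_inv[OF uU] by (simp add: mult.assoc[symmetric])
      then show "v \<in> (\<lambda>w. u * w) ` C 1" using wC by blast
    qed
  qed
qed

lemma local_norm:
  assumes u0: "u0 \<in> U" and r: "u0 * u0 - a \<in> M"
  shows "Kp a u0 * cnj (Kp a u0) = of_nat CARD('a)"
proof -
  define f where "f u = \<tau> u * \<psi> (u + a * ring_inv u)" for u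
  define W where "W = C (1::'a)"
  have wU: "w \<in> U" if "w \<in> W" for w using C_units[OF one_unit] that W_def by blast
  have w1: "w - 1 \<in> M" if "w \<in> W" for w using that W_def C_mem by blast
  have "Kp a u0 * cnj (Kp a u0) = (\<Sum>u\<in>C u0. \<Sum>v\<in>C u0. f u * cnj (f v))"
    unfolding Kp_def f_def[symmetric] by (simp add: sum_product cnj_sum)
  also have "\<dots> = (\<Sum>u\<in>C u0. \<Sum>w\<in>W. cnj (\<tau> w) * \<psi> ((1 - w) * hh a w u))"
  proof (rule sum.cong[OF refl])
    fix u assume u: "u \<in> C u0"
    have uU: "u \<in> U" using u C_units[OF u0] by blast
    have "(\<Sum>v\<in>C u0. f u * cnj (f v)) = (\<Sum>w\<in>W. f u * cnj (f (u * w)))"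
      using sum.reindex_bij_betw[OF mult_C_bij[OF u0 u], of "\<lambda>v. f u * cnj (f v)"] W_def by simp
    also have "\<dots> = (\<Sum>w\<in>W. cnj (\<tau> w) * \<psi> ((1 - w) * hh a w u))"
    proof (rule sum.cong[OF refl])
      fix w assume w: "w \<in> W"
      have wu: "w \<in> U" using wU[OF w] .
      have t: "\<tau> u * cnj (\<tau> (u * w)) = cnj (\<tau> w)"
        using tau_mult[OF uU wu] tau_cnj[OF uU] by (simp add: mult.assoc[symmetric])
      have i: "ring_inv (u * w) = ring_inv u * ring_inv w" using ring_inv_mult[OF uU wu] .
      have "(1 - w) * hh a w u = u - u * w - a * ring_inv w * ring_inv u + a * ring_inv u * (w * ring_inv w)"
        unfolding hh_def by (simp add: algebra_simps)
      also have "\<dots> = u + a * ring_inv u - (u * w + a * (ring_inv u * ring_inv w))"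
        using ring_inv[OF wu] by (simp add: algebra_simps)
      finally have p: "u + a * ring_inv u + - (u * w + a * ring_inv (u * w)) = (1 - w) * hh a w u"
        using i by simp
      have "f u * cnj (f (u * w)) = (\<tau> u * cnj (\<tau> (u * w))) *
          (\<psi> (u + a * ring_inv u) * \<psi> (- (u * w + a * ring_inv (u * w))))"
        unfolding f_def by (simp add: psi_cnj)
      also have "\<dots> = cnj (\<tau> w) * \<psi> ((1 - w) * hh a w u)"
        unfolding t psi_add[symmetric] p ..
      finally show "f u * cnj (f (u * w)) = cnj (\<tau> w) * \<psi> ((1 - w) * hh a w u)" .
    qed
    finally show "(\<Sum>v\<in>C u0. f u * cnj (f v)) = (\<Sum>w\<in>W. cnj (\<tau> w) * \<psi> ((1 - w) * hh a w u))" .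
  qed
  also have "\<dots> = (\<Sum>w\<in>W. cnj (\<tau> w) * (\<Sum>u\<in>C u0. \<psi> ((1 - w) * hh a w u)))"
    by (subst sum.swap) (simp add: sum_distrib_left)
  also have "\<dots> = (\<Sum>w\<in>W. if 1 - w \<in> S then of_nat (card M) else 0)"
  proof (rule sum.cong[OF refl])
    fix w assume w: "w \<in> W"
    have "(\<Sum>u\<in>C u0. \<psi> ((1 - w) * hh a w u)) = (\<Sum>y\<in>C (hh a w u0). \<psi> ((1 - w) * y))"
      using sum.reindex_bij_betw[OF hh_bij[OF u0 r wU[OF w] w1[OF w]], of "\<lambda>y. \<psi> ((1 - w) * y)"]
      by simp
    also have "\<dots> = (\<Sum>m\<in>M. \<psi> ((1 - w) * (hh a w u0 + m)))" by (rule sum_C)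
    also have "\<dots> = \<psi> ((1 - w) * hh a w u0) * (\<Sum>m\<in>M. \<psi> ((1 - w) * m))"
      by (simp add: distrib_left psi_add sum_distrib_left)
    also have "\<dots> = \<psi> ((1 - w) * hh a w u0) * (if 1 - w \<in> S then of_nat (card M) else 0)"
      using ideal_sum[OF M_ideal, of "1 - w"] unfolding ann_M_def by simp
    finally have e: "(\<Sum>u\<in>C u0. \<psi> ((1 - w) * hh a w u)) =
        \<psi> ((1 - w) * hh a w u0) * (if 1 - w \<in> S then of_nat (card M) else 0)" .
    show "cnj (\<tau> w) * (\<Sum>u\<in>C u0. \<psi> ((1 - w) * hh a w u)) = (if 1 - w \<in> S then of_nat (card M) else 0)"
    proof (cases "1 - w \<in> S")
      case True
      have "w - 1 \<in> S" using ideal_neg[OF S_ideal True] by simp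
      then have "\<tau> (1 + (w - 1)) = 1" by (rule tau_S)
      then have tw: "\<tau> w = 1" by simp
      have "(1 - w) * hh a w u0 = 0" using S_mult[OF True hh_u0_M[OF u0 r wU[OF w] w1[OF w]]] .
      then show ?thesis using e tw True by simp
    next
      case False
      then show ?thesis using e by simp
    qed
  qed
  also have "\<dots> = of_nat (card M) * of_nat (card (W \<inter> {w. 1 - w \<in> S}))"
    by (simp add: sum.If_cases)
  also have "W \<inter> {w. 1 - w \<in> S} = (\<lambda>s. 1 - s) ` S"
  proof (intro equalityI subsetI)
    fix w assume "w \<in> W \<inter> {w. 1 - w \<in> S}"
    then have "1 - w \<in> S" by simp
    moreover have "w = 1 - (1 - w)" by simp
    ultimately show "w \<in> (\<lambda>s. 1 - s) ` S" by blast
  next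
    fix w assume "w \<in> (\<lambda>s. 1 - s) ` S"
    then obtain s where s: "s \<in> S" "w = 1 - s" by blast
    have "w - 1 \<in> M" using s S_subset_M M_uminus by auto
    then have "w \<in> C 1" by (simp add: C_def)
    then show "w \<in> W \<inter> {w. 1 - w \<in> S}" using s W_def by simp
  qed
  also have "card ((\<lambda>s. 1 - s) ` S) = card S"
    by (rule card_image) (simp add: inj_on_def)
  finally show ?thesis using card_M_S by (metis of_nat_mult)
qed

end



lemma alg4: fixes al be P Q cP cQ :: complex
  assumes "al * be = 1"
  shows "((al*P + be*Q) * (be*cP + al*cQ))^2 = (P*cP + Q*cQ)^2 + 2*((P*cQ)*(Q*cP))
     + al^4 * (P*cQ)^2 + be^4 * (Q*cP)^2 + 2*(P*cP + Q*cQ)*(al^2 * (P*cQ)) + 2*(P*cP + Q*cQ)*(be^2*(Q*cP))"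
proof -
  have "((al*P + be*Q) * (be*cP + al*cQ)) = (al*be)*(P*cP + Q*cQ) + al^2*(P*cQ) + be^2*(Q*cP)"
    by (simp add: algebra_simps power2_eq_square)
  also have "\<dots> = (P*cP + Q*cQ) + al^2*(P*cQ) + be^2*(Q*cP)" using assms by simp
  finally have e: "((al*P + be*Q) * (be*cP + al*cQ)) = (P*cP + Q*cQ) + al^2*(P*cQ) + be^2*(Q*cP)" .
  have ab: "al^2 * be^2 = 1" using assms by (metis power_mult_distrib power_one)
  have "((P*cP + Q*cQ) + al^2*(P*cQ) + be^2*(Q*cP))^2 = (P*cP + Q*cQ)^2 + 2*(al^2*be^2)*((P*cQ)*(Q*cP))
     + (al^2)^2 * (P*cQ)^2 + (be^2)^2 * (Q*cP)^2 + 2*(P*cP + Q*cQ)*(al^2 * (P*cQ)) + 2*(P*cP + Q*cQ)*(be^2*(Q*cP))"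
    by (simp add: algebra_simps power2_eq_square)
  then show ?thesis unfolding e ab by (simp add: power_mult[symmetric])
qed

context kl begin

lemma Q_shift: "j \<in> M \<Longrightarrow> Q (a + j) = Q a"
proof -
  assume j: "j \<in> M"
  have "u * u - (a + j) \<in> M \<longleftrightarrow> u * u - a \<in> M" for u
  proof
    assume "u * u - (a + j) \<in> M"
    from M_add[OF this j] show "u * u - a \<in> M" by simp
  next
    assume "u * u - a \<in> M"
    from M_diff[OF this j] show "u * u - (a + j) \<in> M" by (simp add: algebra_simps)
  qed
  then show ?thesis unfolding Q_def by simp
qed

lemma inv_C: assumes u0: "u0 \<in> U" and u: "u \<in> C u0" shows "ring_inv u - ring_inv u0 \<in> M"
proof -
  have uU: "u \<in> U" using u C_units[OF u0] by blast
  have "ring_inv u * ring_inv u0 * (u0 - u) = ring_inv u * (u0 * ring_inv u0) - ring_inv u0 * (u * ring_inv u)"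
    by (simp add: algebra_simps)
  also have "\<dots> = ring_inv u - ring_inv u0" using ring_inv[OF u0] ring_inv[OF uU] by simp
  finally have e: "ring_inv u - ring_inv u0 = ring_inv u * ring_inv u0 * (u0 - u)" by simp
  have "u0 - u \<in> M" using M_uminus u by (simp add: C_def) (metis minus_diff_eq)
  then show ?thesis unfolding e by (rule M_mult)
qed

lemma shift_formula:
  assumes u0: "u0 \<in> U" and r: "u0 * u0 - a \<in> M" and j: "j \<in> S"
  shows "kloosterman \<psi> \<tau> (a + j) = \<psi> (j * ring_inv u0) * Kp a u0 + \<psi> (- (j * ring_inv u0)) * Kp a (- u0)"
proof -
  have jM: "j \<in> M" using j S_subset_M by blast
  have mu0: "- u0 \<in> U" using uminus_unit[OF u0] .
  have "kloosterman \<psi> \<tau> (a + j) = (\<Sum>u\<in>Q a. \<tau> u * \<psi> (u + (a + j) * ring_inv u))"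
    using reduction[of "a + j"] Q_shift[OF jM] by simp
  also have "\<dots> = (\<Sum>u\<in>C u0. \<tau> u * \<psi> (u + (a + j) * ring_inv u)) + (\<Sum>u\<in>C (- u0). \<tau> u * \<psi> (u + (a + j) * ring_inv u))"
    unfolding Q_split(1)[OF u0 r] by (rule sum.union_disjoint) (use Q_split(2)[OF u0 r] in auto)
  also have "(\<Sum>u\<in>C u0. \<tau> u * \<psi> (u + (a + j) * ring_inv u)) = \<psi> (j * ring_inv u0) * Kp a u0"
    unfolding Kp_def sum_distrib_left
  proof (rule sum.cong[OF refl])
    fix u assume u: "u \<in> C u0"
    have "j * (ring_inv u - ring_inv u0) = 0" using S_mult[OF j inv_C[OF u0 u]] .
    then have "j * ring_inv u = j * ring_inv u0" by (simp add: algebra_simps)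
    then have "u + (a + j) * ring_inv u = (u + a * ring_inv u) + j * ring_inv u0" by (simp add: algebra_simps)
    then show "\<tau> u * \<psi> (u + (a + j) * ring_inv u) = \<psi> (j * ring_inv u0) * (\<tau> u * \<psi> (u + a * ring_inv u))"
      by (simp add: psi_add)
  qed
  also have "(\<Sum>u\<in>C (- u0). \<tau> u * \<psi> (u + (a + j) * ring_inv u)) = \<psi> (- (j * ring_inv u0)) * Kp a (- u0)"
    unfolding Kp_def sum_distrib_left
  proof (rule sum.cong[OF refl])
    fix u assume u: "u \<in> C (- u0)"
    have "j * (ring_inv u - ring_inv (- u0)) = 0" using S_mult[OF j inv_C[OF mu0 u]] .
    then have "j * ring_inv u + j * ring_inv u0 = 0" using ring_inv_uminus[OF u0] by (simp add: algebra_simps)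
    then have "j * ring_inv u = - (j * ring_inv u0)" by (simp add: eq_neg_iff_add_eq_0)
    then have e: "u + (a + j) * ring_inv u = (u + a * ring_inv u) + - (j * ring_inv u0)" by (simp add: algebra_simps)
    show "\<tau> u * \<psi> (u + (a + j) * ring_inv u) = \<psi> (- (j * ring_inv u0)) * (\<tau> u * \<psi> (u + a * ring_inv u))"
      by (subst e) (simp only: psi_add mult_ac)
  qed
  finally show ?thesis .
qed

lemma S_char_zero: "d \<notin> M \<Longrightarrow> (\<Sum>j\<in>S. \<psi> (d * j)) = 0"
  using ideal_sum[OF S_ideal, of d] ann_S by auto

lemma psi_pow: "\<psi> x ^ n = \<psi> (of_nat n * x)"
  using psi_nat by simp

lemma fourth_sum:
  assumes u0: "u0 \<in> U" and r: "u0 * u0 - a \<in> M"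
  shows "(\<Sum>j\<in>S. complex_of_real (cmod (kloosterman \<psi> \<tau> (a + j)) ^ 4))
      = of_nat (card S) * (6 * of_nat CARD('a) ^ 2)"
proof -
  define c where "c = ring_inv u0"
  have cU: "c \<in> U" unfolding c_def using ring_inv_unit[OF u0] .
  define P where "P = Kp a u0"
  define Q' where "Q' = Kp a (- u0)"
  define X where "X = P * cnj P + Q' * cnj Q'"
  define Y where "Y = P * cnj Q'"
  define Y' where "Y' = Q' * cnj P"
  have PP: "P * cnj P = of_nat CARD('a)" unfolding P_def using local_norm[OF u0 r] .
  have QQ: "Q' * cnj Q' = of_nat CARD('a)" unfolding Q'_def using local_norm[OF uminus_unit[OF u0]] r by simp
  have X: "X = 2 * of_nat CARD('a)" unfolding X_def PP QQ by simp
  have YY: "Y * Y' = of_nat CARD('a) ^ 2"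
  proof -
    have "Y * Y' = (P * cnj P) * (Q' * cnj Q')" unfolding Y_def Y'_def by (simp add: ac_simps)
    then show ?thesis unfolding PP QQ by (simp add: power2_eq_square)
  qed
  have tm: "complex_of_real (cmod (kloosterman \<psi> \<tau> (a + j)) ^ 4) =
      (X^2 + 2 * (Y * Y')) + \<psi> ((of_nat 4 * c) * j) * Y^2 + \<psi> ((- (of_nat 4 * c)) * j) * Y'^2
      + 2 * X * Y * \<psi> ((of_nat 2 * c) * j) + 2 * X * Y' * \<psi> ((- (of_nat 2 * c)) * j)" if j: "j \<in> S" for j
  proof -
    define al where "al = \<psi> (j * c)"
    define be where "be = \<psi> (- (j * c))"
    have ab: "al * be = 1" unfolding al_def be_def using psi_add[of "j * c" "- (j * c)"] by simp
    have K: "kloosterman \<psi> \<tau> (a + j) = al * P + be * Q'"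
      unfolding al_def be_def P_def Q'_def c_def using shift_formula[OF u0 r j] .
    have cK: "cnj (al * P + be * Q') = be * cnj P + al * cnj Q'"
      unfolding al_def be_def by (simp add: psi_cnj)
    have "complex_of_real (cmod (kloosterman \<psi> \<tau> (a + j)) ^ 4) =
        (kloosterman \<psi> \<tau> (a + j) * cnj (kloosterman \<psi> \<tau> (a + j)))^2"
    proof -
      have p4: "z^4 = (z^2)^2" for z :: complex by (simp flip: power_mult)
      have n: "(complex_of_real (cmod (kloosterman \<psi> \<tau> (a + j))))^2 =
          kloosterman \<psi> \<tau> (a + j) * cnj (kloosterman \<psi> \<tau> (a + j))"
        unfolding of_real_power[symmetric] by (rule complex_norm_square)
      show ?thesis by (simp only: of_real_power p4 n)
    qed
    also have "\<dots> = ((al*P + be*Q') * (be*cnj P + al*cnj Q'))^2" unfolding K cK ..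
    also have "\<dots> = X^2 + 2*(Y*Y') + al^4 * Y^2 + be^4 * Y'^2 + 2*X*(al^2 * Y) + 2*X*(be^2*Y')"
      unfolding X_def Y_def Y'_def by (rule alg4[OF ab])
    also have "al ^ 4 = \<psi> ((of_nat 4 * c) * j)" unfolding al_def psi_pow by (simp add: ac_simps)
    also have "be ^ 4 = \<psi> ((- (of_nat 4 * c)) * j)" unfolding be_def psi_pow by (simp add: ac_simps)
    also have "al ^ 2 = \<psi> ((of_nat 2 * c) * j)" unfolding al_def psi_pow by (simp add: ac_simps)
    also have "be ^ 2 = \<psi> ((- (of_nat 2 * c)) * j)" unfolding be_def psi_pow by (simp add: ac_simps)
    finally show ?thesis by (simp add: ac_simps)
  qed
  have u2: "(of_nat 2 * c) \<notin> M" using units_mult[OF two_unit cU] by (simp add: max_ideal_iff)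
  have u4: "(of_nat 4 * c) \<notin> M"
  proof -
    have "(2 * 2) * c \<in> U" using units_mult[OF units_mult[OF two_unit two_unit] cU] .
    then show ?thesis by (simp add: max_ideal_iff)
  qed
  have n2: "- (of_nat 2 * c) \<notin> M" using u2 M_uminus by fastforce
  have n4: "- (of_nat 4 * c) \<notin> M" using u4 M_uminus by fastforce
  have "(\<Sum>j\<in>S. complex_of_real (cmod (kloosterman \<psi> \<tau> (a + j)) ^ 4)) =
     (\<Sum>j\<in>S. (X^2 + 2 * (Y * Y')) + \<psi> ((of_nat 4 * c) * j) * Y^2 + \<psi> ((- (of_nat 4 * c)) * j) * Y'^2
      + 2 * X * Y * \<psi> ((of_nat 2 * c) * j) + 2 * X * Y' * \<psi> ((- (of_nat 2 * c)) * j))"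
    using tm by (rule sum.cong[OF refl])
  also have "\<dots> = of_nat (card S) * (X^2 + 2 * (Y * Y'))
      + (\<Sum>j\<in>S. \<psi> ((of_nat 4 * c) * j)) * Y^2 + (\<Sum>j\<in>S. \<psi> ((- (of_nat 4 * c)) * j)) * Y'^2
      + 2 * X * Y * (\<Sum>j\<in>S. \<psi> ((of_nat 2 * c) * j)) + 2 * X * Y' * (\<Sum>j\<in>S. \<psi> ((- (of_nat 2 * c)) * j))"
    by (simp add: sum.distrib sum_distrib_left sum_distrib_right)
  also have "\<dots> = of_nat (card S) * (X^2 + 2 * (Y * Y'))"
    using S_char_zero[OF u2] S_char_zero[OF u4] S_char_zero[OF n2] S_char_zero[OF n4] by simp
  also have "\<dots> = of_nat (card S) * (6 * of_nat CARD('a) ^ 2)"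
    unfolding X YY by (simp add: power2_eq_square)
  finally show ?thesis .
qed

end



lemma card_filter_sum: "finite A \<Longrightarrow> card {x\<in>A. P x} = (\<Sum>x\<in>A. if P x then 1 else 0)"
  by (simp add: sum.If_cases Int_def conj_commute)

context kl begin

lemma card_Q: "card (Q a) = (if Q a \<noteq> {} then 2 * card M else 0)"
proof (cases "Q a = {}")
  case False
  then obtain u0 where "u0 \<in> Q a" by blast
  then have u0: "u0 \<in> U" and r: "u0 * u0 - a \<in> M" unfolding Q_def by auto
  have "card (Q a) = card (C u0) + card (C (- u0))"
    unfolding Q_split(1)[OF u0 r] by (rule card_Un_disjoint) (use Q_split(2)[OF u0 r] in auto)
  then show ?thesis using False card_C by simp
qed simp

lemma sum_card_Q: "(\<Sum>a\<in>U. card (Q a)) = card U * card M"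
proof -
  have "(\<Sum>a\<in>U. card (Q a)) = (\<Sum>a\<in>U. \<Sum>u\<in>U. if u * u - a \<in> M then 1 else 0)"
    unfolding Q_def by (simp add: card_filter_sum)
  also have "\<dots> = (\<Sum>u\<in>U. \<Sum>a\<in>U. if u * u - a \<in> M then 1 else 0)" by (rule sum.swap)
  also have "\<dots> = (\<Sum>u\<in>U. card M)"
  proof (rule sum.cong[OF refl])
    fix u assume u: "u \<in> U"
    have uu: "u * u \<in> U" using units_mult[OF u u] .
    have "{a\<in>U. u * u - a \<in> M} = C (u * u)"
    proof (intro equalityI subsetI)
      fix a assume "a \<in> {a\<in>U. u * u - a \<in> M}"
      then have "- (u * u - a) \<in> M" using M_uminus by blast
      then show "a \<in> C (u * u)" by (simp add: C_def)
    next
      fix a assume a: "a \<in> C (u * u)"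
      then have "a - u * u \<in> M" by (simp add: C_def)
      then have "- (a - u * u) \<in> M" by (rule M_uminus)
      moreover have "a \<in> U" using a C_units[OF uu] by blast
      ultimately show "a \<in> {a\<in>U. u * u - a \<in> M}" by simp
    qed
    then show "(\<Sum>a\<in>U. if u * u - a \<in> M then 1 else 0) = card M"
      using card_filter_sum[of U "\<lambda>a. u * u - a \<in> M"] card_C by simp
  qed
  finally show ?thesis by simp
qed

lemma count_squares: "2 * card {a\<in>U. Q a \<noteq> {}} = card U"
proof -
  have "card U * card M = (\<Sum>a\<in>U. if Q a \<noteq> {} then 2 * card M else 0)"
    using sum_card_Q card_Q by simp
  also have "\<dots> = (2 * card M) * card {a\<in>U. Q a \<noteq> {}}"
    by (simp add: card_filter_sum sum_distrib_left if_distrib cong: if_cong)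
  finally have e0: "card U * card M = (2 * card M) * card {a\<in>U. Q a \<noteq> {}}" .
  have "card U * card M = (2 * card {a\<in>U. Q a \<noteq> {}}) * card M" unfolding e0 by (simp only: ac_simps)
  moreover have "M \<noteq> {}" using M_zero by blast
  then have "card M \<noteq> 0" by (simp add: card_eq_0_iff)
  ultimately show ?thesis by (metis mult_right_cancel)
qed

lemma main:
  "(\<Sum>a\<in>U. (cmod (kloosterman \<psi> \<tau> a)) ^ 4) = 3 * real (card U) * real (CARD('a)) ^ 2"
proof -
  define g where "g a = (cmod (kloosterman \<psi> \<tau> a)) ^ 4" for a
  define N where "N = card {a\<in>U. Q a \<noteq> {}}"
  have shift: "(\<Sum>a\<in>U. g a) = (\<Sum>a\<in>U. g (a + j))" if j: "j \<in> S" for j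
  proof -
    have jM: "j \<in> M" using j S_subset_M by blast
    have bij: "bij_betw (\<lambda>a. a + j) U U"
      unfolding bij_betw_def inj_on_def
    proof (intro conjI ballI impI equalityI subsetI)
      fix a assume a: "a \<in> U"
      have "a + - j \<in> U" using unit_add_M[OF a M_uminus[OF jM]] .
      then show "a \<in> (\<lambda>a. a + j) ` U" by (rule rev_image_eqI) simp
    qed (use unit_add_M jM in auto)
    show ?thesis using sum.reindex_bij_betw[OF bij, of g] by simp
  qed
  have each: "(\<Sum>j\<in>S. g (a + j)) = (if Q a \<noteq> {} then real (card S) * (6 * real CARD('a) ^ 2) else 0)"
    if a: "a \<in> U" for a
  proof (cases "Q a = {}")
    case True
    have "g (a + j) = 0" if j: "j \<in> S" for j
    proof -
      have "j \<in> M" using j S_subset_M by blast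
      then have "kloosterman \<psi> \<tau> (a + j) = 0" using reduction[of "a + j"] Q_shift True by simp
      then show ?thesis unfolding g_def by simp
    qed
    then show ?thesis using True by simp
  next
    case False
    then obtain u0 where "u0 \<in> Q a" by blast
    then have u0: "u0 \<in> U" and r: "u0 * u0 - a \<in> M" unfolding Q_def by auto
    have "complex_of_real (\<Sum>j\<in>S. g (a + j)) = complex_of_real (real (card S) * (6 * real CARD('a) ^ 2))"
      using fourth_sum[OF u0 r] unfolding g_def by simp
    then have "(\<Sum>j\<in>S. g (a + j)) = real (card S) * (6 * real CARD('a) ^ 2)"
      by (simp only: of_real_eq_iff)
    then show ?thesis using False by simp
  qed
  have "real (card S) * (\<Sum>a\<in>U. g a) = (\<Sum>j\<in>S. \<Sum>a\<in>U. g a)" by simp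
  also have "\<dots> = (\<Sum>j\<in>S. \<Sum>a\<in>U. g (a + j))" using shift by (rule sum.cong[OF refl])
  also have "\<dots> = (\<Sum>a\<in>U. \<Sum>j\<in>S. g (a + j))" by (rule sum.swap)
  also have "\<dots> = (\<Sum>a\<in>U. if Q a \<noteq> {} then real (card S) * (6 * real CARD('a) ^ 2) else 0)"
    using each by (rule sum.cong[OF refl])
  also have "\<dots> = real N * (real (card S) * (6 * real CARD('a) ^ 2))"
    unfolding N_def by (simp add: sum.If_cases Int_def conj_commute)
  finally have e: "real (card S) * (\<Sum>a\<in>U. g a) = real (card S) * (real N * (6 * real CARD('a) ^ 2))"
    by (simp add: ac_simps)
  have "S \<noteq> {}" using S_nonzero by blast
  then have "card S \<noteq> 0" by simp
  then have "(\<Sum>a\<in>U. g a) = real N * (6 * real CARD('a) ^ 2)" using e by simp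
  also have "\<dots> = 3 * real (2 * N) * real CARD('a) ^ 2" by simp
  also have "2 * N = card U" unfolding N_def by (rule count_squares)
  finally show ?thesis unfolding g_def .
qed

end

theorem mainTheorem12:
  fixes \<psi> \<tau> :: "'a::{comm_ring_1,finite} \<Rightarrow> complex"
  assumes "local_ring TYPE('a)"
    and "\<not> is_field_ring TYPE('a)"
    and "odd (residue_char TYPE('a))"
    and "primitive_additive_character \<psi>"
    and "mult_character \<tau>"
    and "\<not> primitive_mult_character \<tau>"
  shows "(\<Sum>a\<in>(units_of_ring::'a set). (cmod (kloosterman \<psi> \<tau> a)) ^ 4)
           = 3 * real (card (units_of_ring::'a set)) * real (CARD('a)) ^ 2"
proof -
  interpret kl \<psi> \<tau> using assms by (unfold_locales)
  show ?thesis by (rule main)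
qed


end
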